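(* Let $L$ be a combinatorial tiling locally isomorphic to $K$, and let $L_{\mathrm{aff}}^{(1)}$ be the 1-skeleton of $L_{\mathrm{aff}}$. Let $d'$ be the unit-edge metric on $L_{\mathrm{aff}}^{(1)}$ and $d$ the path metric on $L_{\mathrm{aff}}$ restricted to $L_{\mathrm{aff}}^{(1)}$. Then $d'$ and $d$ are equivalent on $L_{\mathrm{aff}}^{(1)}$; more precisely, $d\le d'\le 3d$.
   Context: A combinatorial tiling is a 2-dimensional CW-complex homeomorphic to the plane. The combinatorial pentagonal tiling $K$ is built as follows: $K_0$ is a (decorated) combinatorial pentagon, i.e. a space homeomorphic to the closed disk with five distinguished boundary points; the pentagonal subdivision rule $\omega$ replaces each pentagon $t$ by a supertile $\omega(t)$ consisting of six pentagons (a central pentagon surrounded by a ring of five, combinatorially half a dodecahedron), each edge of $t$ being split into two edges, with decorations of the subtiles prescribed by the rule (finitely many decorated prototiles); $K_n:=\omega^n(K_0)$, embeddings $\iota_n:K_n\to K_{n+1}$ send the central pentagon to the central pentagon, and $K:=\varinjlim K_n$. A combinatorial tiling $L$ is locally isomorphic to $K$ if every finite patch (finite subcomplex) of $L$ is isomorphic, via a cell-preserving decoration-preserving isomorphism, to a patch of $K$. For such $L$, $L_{\mathrm{aff}}$ is the space $L$ with the metric obtained by making each edge isometric to $[0,1]$ and each face isometric to a Euclidean regular pentagon of side length $1$; the distance $d$ between two points is the length of a shortest path between them. The unit-edge metric $d'$ on the 1-skeleton is the length of a shortest path within the 1-skeleton (edge-path), each edge having length $1$. *)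

theory Defs
  imports "HOL-Analysis.Analysis" "HOL-Library.FSet"
begin

text \<open>A combinatorial 2-complex all of whose faces are pentagons is encoded by a set of
faces F and a corner map cor: the corners of face f in cyclic order are
cor f 0, ..., cor f 4 (indices are taken mod 5).\<close>

definition nx :: "nat \<Rightarrow> nat" where "nx k = Suc k mod 5"

definition cx_verts :: "'f set \<Rightarrow> ('f \<Rightarrow> nat \<Rightarrow> 'v) \<Rightarrow> 'v set" where
  "cx_verts F cor = {cor f i | f i. f \<in> F \<and> i < 5}"

definition cx_edges :: "'f set \<Rightarrow> ('f \<Rightarrow> nat \<Rightarrow> 'v) \<Rightarrow> 'v set set" where
  "cx_edges F cor = {{cor f i, cor f (nx i)} | f i. f \<in> F \<and> i < 5}"

definition subcomplex ::
  "'f set \<Rightarrow> ('f \<Rightarrow> nat \<Rightarrow> 'v) \<Rightarrow> 'v set \<Rightarrow> 'v set set \<Rightarrow> 'f set \<Rightarrow> bool" where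
  "subcomplex F cor Vs Es Fs \<longleftrightarrow>
     finite Vs \<and> finite Es \<and> finite Fs \<and>
     Vs \<subseteq> cx_verts F cor \<and> Es \<subseteq> cx_edges F cor \<and> Fs \<subseteq> F \<and>
     (\<forall>f\<in>Fs. \<forall>i<5. cor f i \<in> Vs \<and> {cor f i, cor f (nx i)} \<in> Es) \<and>
     (\<forall>e\<in>Es. e \<subseteq> Vs)"

text \<open>Cell-preserving isomorphism of patches: bijections on vertices and faces, inducing a
bijection on edges, such that the boundary cycle of each face is carried to the boundary
cycle of the image face (up to rotation / reflection of the pentagon).\<close>

definition patch_iso ::
  "('f1 \<Rightarrow> nat \<Rightarrow> 'v1) \<Rightarrow> 'v1 set \<Rightarrow> 'v1 set set \<Rightarrow> 'f1 set \<Rightarrow>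
   ('f2 \<Rightarrow> nat \<Rightarrow> 'v2) \<Rightarrow> 'v2 set \<Rightarrow> 'v2 set set \<Rightarrow> 'f2 set \<Rightarrow> bool" where
  "patch_iso cor1 Vs1 Es1 Fs1 cor2 Vs2 Es2 Fs2 \<longleftrightarrow>
     (\<exists>\<phi> \<psi>. bij_betw \<phi> Vs1 Vs2 \<and> bij_betw \<psi> Fs1 Fs2 \<and>
        (\<lambda>e. \<phi> ` e) ` Es1 = Es2 \<and>
        (\<forall>f\<in>Fs1. \<exists>r<5. \<exists>s::bool. \<forall>i<5.
            \<phi> (cor1 f i) = cor2 (\<psi> f) (if s then (r + i) mod 5 else (r + (5 - i)) mod 5)))"

text \<open>Vertex names: the five corners of K_0, midpoints of edges (named by the unordered pair
of endpoints), and the five central vertices of the supertile of a face (named by the face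
address and an index).\<close>

datatype pv = Top nat | Mid "pv fset" | Cen "nat list" nat

text \<open>Faces of K_n are addresses: lists of digits in {0..5} of length n; the head digit is the
position in the last subdivision step (5 = central pentagon, j < 5 = j-th ring pentagon).
The subdivision rule omega: the central pentagon has corners Cen w 0..4; the spoke from
Cen w j goes to the midpoint of edge j (corners j, j+1) of face w; ring pentagon j has corners
Cen w j, Cen w (j+1), Mid(v(j+1),v(j+2)), v(j+1), Mid(v j, v(j+1)).\<close>

fun kcor :: "nat list \<Rightarrow> nat \<Rightarrow> pv" where
  "kcor [] i = Top (i mod 5)"
| "kcor (d # w) i =
     (if d = 5 then Cen w (i mod 5)
      else (let v = (\<lambda>k. kcor w (k mod 5)) in
            (if i mod 5 = 0 then Cen w (d mod 5)
             else if i mod 5 = 1 then Cen w ((d + 1) mod 5)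
             else if i mod 5 = 2 then Mid {|v (d + 1), v (d + 2)|}
             else if i mod 5 = 3 then v (d + 1)
             else Mid {|v d, v (d + 1)|})))"

definition kfaces :: "nat \<Rightarrow> nat list set" where
  "kfaces n = {w. length w = n \<and> (\<forall>d\<in>set w. d \<le> 5)}"

text \<open>K is the direct limit of the K_n = omega^n(K_0); its finite patches are exactly the
finite patches of the K_n.  L is locally isomorphic to K iff every finite patch of L is
isomorphic to a patch of K.\<close>

definition locally_iso_K :: "'f set \<Rightarrow> ('f \<Rightarrow> nat \<Rightarrow> 'v) \<Rightarrow> bool" where
  "locally_iso_K F cor \<longleftrightarrow>
     (\<forall>Vs Es Fs. subcomplex F cor Vs Es Fs \<longrightarrow>
        (\<exists>n Vs' Es' Fs'. subcomplex (kfaces n) kcor Vs' Es' Fs' \<and>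
            patch_iso cor Vs Es Fs kcor Vs' Es' Fs'))"

definition Rpent :: real where "Rpent = 1 / (2 * sin (pi / 5))"

text \<open>Corners of the standard regular pentagon of side length 1.\<close>
definition pc :: "nat \<Rightarrow> complex" where
  "pc k = complex_of_real Rpent * cis (2 * pi * real k / 5)"

definition Pent :: "complex set" where "Pent = convex hull (pc ` {..<5})"

definition pedge :: "nat \<Rightarrow> complex set" where
  "pedge k = closed_segment (pc k) (pc (Suc k))"

text \<open>Points of L_aff are represented by (face, point of the standard pentagon); the gluing
relation identifies corners with equal vertex names and edge points along edges with equal
endpoints (isometrically, respecting endpoints).\<close>

definition glue :: "'f set \<Rightarrow> ('f \<Rightarrow> nat \<Rightarrow> 'v) \<Rightarrow> 'f \<times> complex \<Rightarrow> 'f \<times> complex \<Rightarrow> bool" where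
  "glue F cor p q \<longleftrightarrow> (case p of (f, z) \<Rightarrow> case q of (g, w) \<Rightarrow>
     f \<in> F \<and> g \<in> F \<and> z \<in> Pent \<and> w \<in> Pent \<and>
     ((f = g \<and> z = w) \<or>
      (\<exists>k<5. \<exists>j<5. z = pc k \<and> w = pc j \<and> cor f k = cor g j) \<or>
      (\<exists>k<5. \<exists>j<5. \<exists>t::real. 0 \<le> t \<and> t \<le> 1 \<and> z = (1 - t) *\<^sub>R pc k + t *\<^sub>R pc (Suc k) \<and>
         ((cor f k = cor g j \<and> cor f (nx k) = cor g (nx j) \<and>
             w = (1 - t) *\<^sub>R pc j + t *\<^sub>R pc (Suc j)) \<or>
          (cor f k = cor g (nx j) \<and> cor f (nx k) = cor g j \<and>
             w = t *\<^sub>R pc j + (1 - t) *\<^sub>R pc (Suc j))))))"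

definition same_pt :: "'f set \<Rightarrow> ('f \<Rightarrow> nat \<Rightarrow> 'v) \<Rightarrow> 'f \<times> complex \<Rightarrow> 'f \<times> complex \<Rightarrow> bool" where
  "same_pt F cor p q \<longleftrightarrow> (p, q) \<in> {(a, b). glue F cor a b}\<^sup>*"

definition reps :: "'f set \<Rightarrow> ('f \<times> complex) set" where
  "reps F = Sigma F (\<lambda>_. Pent)"

definition cls :: "'f set \<Rightarrow> ('f \<Rightarrow> nat \<Rightarrow> 'v) \<Rightarrow> 'f \<times> complex \<Rightarrow> ('f \<times> complex) set" where
  "cls F cor p = {q \<in> reps F. same_pt F cor p q}"

text \<open>CW (weak/quotient) topology on the realisation: a set of points is open iff its
preimage in every closed face is open.\<close>

definition realisation_top :: "'f set \<Rightarrow> ('f \<Rightarrow> nat \<Rightarrow> 'v) \<Rightarrow> ('f \<times> complex) set topology" where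
  "realisation_top F cor = topology (\<lambda>U. U \<subseteq> cls F cor ` reps F \<and>
      (\<forall>f\<in>F. openin (top_of_set Pent) {z \<in> Pent. cls F cor (f, z) \<in> U}))"

lemma istopology_realisation:
  "istopology (\<lambda>U. U \<subseteq> cls F cor ` reps F \<and>
      (\<forall>f\<in>F. openin (top_of_set Pent) {z \<in> Pent. cls F cor (f, z) \<in> U}))"
  unfolding istopology_def
proof (rule conjI; intro allI impI)
  fix S T
  assume S: "S \<subseteq> cls F cor ` reps F \<and> (\<forall>f\<in>F. openin (top_of_set Pent) {z \<in> Pent. cls F cor (f, z) \<in> S})"
    and T: "T \<subseteq> cls F cor ` reps F \<and> (\<forall>f\<in>F. openin (top_of_set Pent) {z \<in> Pent. cls F cor (f, z) \<in> T})"
  show "S \<inter> T \<subseteq> cls F cor ` reps F \<and> (\<forall>f\<in>F. openin (top_of_set Pent) {z \<in> Pent. cls F cor (f, z) \<in> S \<inter> T})"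
  proof (intro conjI ballI)
    show "S \<inter> T \<subseteq> cls F cor ` reps F" using S by blast
  next
    fix f assume "f \<in> F"
    then show "openin (top_of_set Pent) {z \<in> Pent. cls F cor (f, z) \<in> S \<inter> T}"
    proof -
      have e: "{z \<in> Pent. cls F cor (f, z) \<in> S \<inter> T} =
          {z \<in> Pent. cls F cor (f, z) \<in> S} \<inter> {z \<in> Pent. cls F cor (f, z) \<in> T}" by blast
      show ?thesis unfolding e using S T \<open>f \<in> F\<close> by (intro openin_Int) auto
    qed
  qed
next
  fix KK
  assume H: "\<forall>K\<in>KK. K \<subseteq> cls F cor ` reps F \<and> (\<forall>f\<in>F. openin (top_of_set Pent) {z \<in> Pent. cls F cor (f, z) \<in> K})"
  show "\<Union>KK \<subseteq> cls F cor ` reps F \<and> (\<forall>f\<in>F. openin (top_of_set Pent) {z \<in> Pent. cls F cor (f, z) \<in> \<Union>KK})"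
  proof (intro conjI ballI)
    show "\<Union>KK \<subseteq> cls F cor ` reps F" using H by blast
  next
    fix f assume "f \<in> F"
    have e: "{z \<in> Pent. cls F cor (f, z) \<in> \<Union>KK} = \<Union>((\<lambda>K. {z \<in> Pent. cls F cor (f, z) \<in> K}) ` KK)" by blast
    show "openin (top_of_set Pent) {z \<in> Pent. cls F cor (f, z) \<in> \<Union>KK}"
      unfolding e using H \<open>f \<in> F\<close> by (intro openin_Union) auto
  qed
qed

definition combinatorial_tiling :: "'f set \<Rightarrow> ('f \<Rightarrow> nat \<Rightarrow> 'v) \<Rightarrow> bool" where
  "combinatorial_tiling F cor \<longleftrightarrow>
     realisation_top F cor homeomorphic_space (euclidean :: (real^2) topology)"

text \<open>Strings (Bridson-Haefliger): a nonempty list of steps (f, z, w), each a straight segment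
from z to w inside the closed face f, consecutive steps joined at the same point of L.
ok restricts which segments are allowed.\<close>

definition string_ok ::
  "'f set \<Rightarrow> ('f \<Rightarrow> nat \<Rightarrow> 'v) \<Rightarrow> (complex \<Rightarrow> complex \<Rightarrow> bool) \<Rightarrow>
   'f \<times> complex \<Rightarrow> 'f \<times> complex \<Rightarrow> ('f \<times> complex \<times> complex) list \<Rightarrow> bool" where
  "string_ok F cor ok p q ss \<longleftrightarrow>
     ss \<noteq> [] \<and>
     (\<forall>(f, z, w) \<in> set ss. f \<in> F \<and> z \<in> Pent \<and> w \<in> Pent \<and> ok z w) \<and>
     same_pt F cor p (fst (hd ss), fst (snd (hd ss))) \<and>
     same_pt F cor (fst (last ss), snd (snd (last ss))) q \<and>
     (\<forall>i. Suc i < length ss \<longrightarrow>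
        same_pt F cor (fst (ss ! i), snd (snd (ss ! i))) (fst (ss ! Suc i), fst (snd (ss ! Suc i))))"

definition string_len :: "('f \<times> complex \<times> complex) list \<Rightarrow> real" where
  "string_len ss = sum_list (map (\<lambda>(f, z, w). cmod (z - w)) ss)"

definition dist_aff :: "'f set \<Rightarrow> ('f \<Rightarrow> nat \<Rightarrow> 'v) \<Rightarrow> 'f \<times> complex \<Rightarrow> 'f \<times> complex \<Rightarrow> real" where
  "dist_aff F cor p q = Inf {string_len ss | ss. string_ok F cor (\<lambda>_ _. True) p q ss}"

definition dist_edge :: "'f set \<Rightarrow> ('f \<Rightarrow> nat \<Rightarrow> 'v) \<Rightarrow> 'f \<times> complex \<Rightarrow> 'f \<times> complex \<Rightarrow> real" where
  "dist_edge F cor p q =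
     Inf {string_len ss | ss. string_ok F cor (\<lambda>z w. \<exists>k<5. z \<in> pedge k \<and> w \<in> pedge k) p q ss}"

definition skel :: "complex set" where "skel = (\<Union>k<5. pedge k)"

end

theory Submission
  imports Defs
begin

lemma pc_Suc: "pc (Suc k) = pc k * cis (2*pi/5)"
  unfolding pc_def by (simp add: cis_mult algebra_simps add_divide_distrib)
lemma pc_add5: "pc (k+5) = pc k"
proof -
  have h: "2 * pi * real (k+5) / 5 = 2 * pi * real k / 5 + 2*pi" by (simp add: field_simps)
  have "cis (2 * pi * real k / 5 + 2*pi) = cis (2 * pi * real k / 5)"
    by (simp add: cis.ctr sin_add cos_add)
  then show ?thesis unfolding pc_def h by simp
qed
lemma pc_add5n: "pc (m + 5*n) = pc m"
proof (induction n)
  case 0 then show ?case by simp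
next
  case (Suc n)
  have "m + 5*Suc n = (m+5*n)+5" by simp
  then show ?case by (simp only: pc_add5 Suc.IH)
qed
lemma pc_mod: "pc (k mod 5) = pc k"
  using pc_add5n[of "k mod 5" "k div 5"] by simp
lemma pedge_mod: "pedge (k mod 5) = pedge k"
proof -
  have "pc (Suc (k mod 5)) = pc (Suc k)"
    by (metis mod_Suc_eq pc_mod)
  then show ?thesis unfolding pedge_def by (simp add: pc_mod)
qed
lemma D_Suc: "pc (Suc (Suc k)) - pc (Suc k) = (pc (Suc k) - pc k) * cis(2*pi/5)"
  by (simp add: pc_Suc algebra_simps)
lemma cos25: "cos (2*pi/5) > 0"
  by (rule cos_gt_zero_pi) (auto simp: field_simps)
lemma inner_rot: "inner x (x * cis(2*pi/5)) \<ge> 0"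
proof -
  have "inner x (x * cis(2*pi/5)) = (Re x ^2 + Im x^2) * cos (2*pi/5)"
    by (simp add: inner_complex_def power2_eq_square algebra_simps)
  then show ?thesis using cos25 by simp
qed
lemma D_inner: "inner (pc (Suc k) - pc k) (pc (Suc (Suc k)) - pc (Suc k)) \<ge> 0"
  unfolding D_Suc by (rule inner_rot)
lemma D_norm: "norm (pc (Suc (Suc k)) - pc (Suc k)) = norm (pc (Suc k) - pc k)"
  unfolding D_Suc by (simp add: norm_mult)

lemma linear_arith_helper: "(X::real) \<le> Y \<Longrightarrow> 0 \<le> Y \<Longrightarrow> 2 * X \<le> 9 * Y" by linarith
lemma seg_obtain:
  assumes "z \<in> closed_segment a b"
  obtains s where "0 \<le> s" "s \<le> 1" "z - b = (1 - s) *\<^sub>R (a - b)" "z - a = s *\<^sub>R (b - a)"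
proof -
  from assms obtain s where s: "0 \<le> s" "s \<le> 1" "z = (1 - s) *\<^sub>R a + s *\<^sub>R b"
    unfolding closed_segment_def by blast
  show ?thesis
    by (rule that[OF s(1,2)]) (simp_all add: s(3) algebra_simps)
qed

lemma GA:
  assumes z: "z \<in> pedge k" and w: "w \<in> pedge (Suc k)"
  shows "cmod (z - pc (Suc k)) + cmod (pc (Suc k) - w) \<le> 3 * cmod (z - w)"
proof -
  define c where "c = pc (Suc k)"
  define D0 where "D0 = c - pc k"
  define D1 where "D1 = pc (Suc (Suc k)) - c"
  obtain s where s: "0 \<le> s" "s \<le> 1" "z - c = (1 - s) *\<^sub>R (pc k - c)"
    using z unfolding pedge_def c_def by (metis seg_obtain)
  obtain t where t: "0 \<le> t" "t \<le> 1" "w - c = t *\<^sub>R D1"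
    using w unfolding pedge_def c_def D1_def by (metis seg_obtain)
  have zc: "z - c = - ((1 - s) *\<^sub>R D0)" using s(3) by (simp add: D0_def algebra_simps)
  have i0: "inner D0 D1 \<ge> 0" unfolding D0_def D1_def c_def by (rule D_inner)
  have "inner (z - c) (w - c) = - ((1 - s) * t * inner D0 D1)"
    unfolding zc t(3) by (simp add: inner_minus_left algebra_simps)
  also have "\<dots> \<le> 0" using s t i0 by (simp add: mult_nonneg_nonneg)
  finally have ineg: "inner (z - c) (w - c) \<le> 0" .
  define a where "a = cmod (z - c)"
  define b where "b = cmod (w - c)"
  have "(z - c) - (w - c) = z - w" by simp
  then have "inner (z - c) (w - c) = (a^2 + b^2 - (cmod (z - w))^2) / 2"
    unfolding a_def b_def by (metis dot_norm_neg)
  with ineg have sq: "a^2 + b^2 \<le> (cmod (z - w))^2" by simp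
  have "(a + b)^2 \<le> (3 * cmod (z - w))^2"
  proof -
    have "(a+b)^2 \<le> 2 * (a^2 + b^2)" using sum_squares_ge_zero[of a b]
      by (smt (verit) power2_sum power2_diff zero_le_power2)
    also have "\<dots> \<le> 9 * (cmod (z-w))^2" using sq zero_le_power2[of "cmod (z-w)"]
      by (metis (no_types) linear_arith_helper)
    finally show ?thesis by (simp add: power_mult_distrib)
  qed
  then have "a + b \<le> 3 * cmod (z - w)"
    by (rule power2_le_imp_le) simp
  moreover have "cmod (pc (Suc k) - w) = b" unfolding b_def c_def by (simp add: norm_minus_commute)
  ultimately show ?thesis unfolding a_def c_def by simp
qed

lemma GB:
  assumes z: "z \<in> pedge k" and w: "w \<in> pedge (Suc (Suc k))"
  shows "cmod (z - pc (Suc k)) + cmod (pc (Suc k) - pc (Suc (Suc k))) + cmod (pc (Suc (Suc k)) - w)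
     \<le> 3 * cmod (z - w)"
proof -
  define c1 where "c1 = pc (Suc k)"
  define c2 where "c2 = pc (Suc (Suc k))"
  define c3 where "c3 = pc (Suc (Suc (Suc k)))"
  define e where "e = c2 - c1"
  define l where "l = norm e"
  obtain s where s: "0 \<le> s" "s \<le> 1" "z - c1 = (1 - s) *\<^sub>R (pc k - c1)"
    using z unfolding pedge_def c1_def by (metis seg_obtain)
  obtain t where t: "0 \<le> t" "t \<le> 1" "w - c2 = t *\<^sub>R (c3 - c2)"
    using w unfolding pedge_def c2_def c3_def by (metis seg_obtain)
  have n0: "norm (c1 - pc k) = l" unfolding l_def e_def c1_def c2_def by (simp add: D_norm)
  have n2: "norm (c3 - c2) = l" unfolding l_def e_def c3_def c2_def c1_def
    using D_norm[of "Suc k"] by simp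
  have i0: "inner (c1 - pc k) e \<ge> 0" unfolding e_def c1_def c2_def by (rule D_inner)
  have i2: "inner (c3 - c2) e \<ge> 0" unfolding e_def c3_def c2_def c1_def
    using D_inner[of "Suc k"] by (simp add: inner_commute)
  have wz: "w = c2 + t *\<^sub>R (c3 - c2)" using t(3) by (simp add: algebra_simps)
  have zz: "z = c1 + (1 - s) *\<^sub>R (pc k - c1)" using s(3) by (simp add: algebra_simps)
  have "w - z = t *\<^sub>R (c3 - c2) + e + (1 - s) *\<^sub>R (c1 - pc k)"
    unfolding wz zz e_def by (simp add: algebra_simps)
  then have "inner (w - z) e = t * inner (c3 - c2) e + inner e e + (1 - s) * inner (c1 - pc k) e"
    by (simp add: inner_add_left)
  moreover have "inner e e = l^2" unfolding l_def by (simp add: power2_norm_eq_inner)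
  ultimately have "l^2 \<le> inner (w - z) e" using s t i0 i2 by (simp add: mult_nonneg_nonneg)
  also have "\<dots> \<le> norm (w - z) * l" unfolding l_def by (rule norm_cauchy_schwarz)
  finally have ll: "l * l \<le> norm (w - z) * l" by (simp add: power2_eq_square)
  have lz: "l \<le> cmod (z - w)"
  proof (cases "l = 0")
    case True then show ?thesis by simp
  next
    case False then have "l > 0" unfolding l_def by simp
    with ll show ?thesis by (simp add: norm_minus_commute)
  qed
  have a: "cmod (z - c1) \<le> l" using s n0
    by (simp add: norm_minus_commute mult_le_cancel_right1) (smt (verit) mult_left_le_one_le norm_ge_zero)
  have b: "cmod (c2 - w) \<le> l" using t n2
    by (simp add: norm_minus_commute[of c2 w]) (smt (verit) mult_left_le_one_le norm_ge_zero)
  have "cmod (c1 - c2) = l" unfolding l_def e_def by (simp add: norm_minus_commute)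
  with a b lz show ?thesis unfolding c1_def c2_def by linarith
qed

lemma same_pt_refl: "same_pt F cor p p" unfolding same_pt_def by simp
lemma same_pt_trans: "same_pt F cor p q \<Longrightarrow> same_pt F cor q r \<Longrightarrow> same_pt F cor p r"
  unfolding same_pt_def by (rule rtrancl_trans)

lemma so_single:
  "f \<in> F \<Longrightarrow> z \<in> Pent \<Longrightarrow> w \<in> Pent \<Longrightarrow> ok z w \<Longrightarrow> same_pt F cor p (f, z) \<Longrightarrow>
   same_pt F cor (f, w) q \<Longrightarrow> string_ok F cor ok p q [(f, z, w)]"
  unfolding string_ok_def by auto

lemma so_pre: "same_pt F cor p p' \<Longrightarrow> string_ok F cor ok p' q ss \<Longrightarrow> string_ok F cor ok p q ss"
  unfolding string_ok_def using same_pt_trans by blast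
lemma so_post: "string_ok F cor ok p q' ss \<Longrightarrow> same_pt F cor q' q \<Longrightarrow> string_ok F cor ok p q ss"
  unfolding string_ok_def using same_pt_trans by blast

lemma so_mono: "(\<And>z w. ok1 z w \<Longrightarrow> ok2 z w) \<Longrightarrow> string_ok F cor ok1 p q ss \<Longrightarrow> string_ok F cor ok2 p q ss"
  unfolding string_ok_def by fast

lemma so_append:
  assumes 1: "string_ok F cor ok p q s1" and 2: "string_ok F cor ok q r s2"
  shows "string_ok F cor ok p r (s1 @ s2)"
proof -
  have n1: "s1 \<noteq> []" and n2: "s2 \<noteq> []" using 1 2 unfolding string_ok_def by auto
  have J1: "\<And>i. Suc i < length s1 \<Longrightarrow>
        same_pt F cor (fst (s1 ! i), snd (snd (s1 ! i))) (fst (s1 ! Suc i), fst (snd (s1 ! Suc i)))"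
    using 1 unfolding string_ok_def by blast
  have J2: "\<And>i. Suc i < length s2 \<Longrightarrow>
        same_pt F cor (fst (s2 ! i), snd (snd (s2 ! i))) (fst (s2 ! Suc i), fst (snd (s2 ! Suc i)))"
    using 2 unfolding string_ok_def by blast
  have mid: "same_pt F cor (fst (last s1), snd (snd (last s1))) (fst (hd s2), fst (snd (hd s2)))"
    using 1 2 unfolding string_ok_def using same_pt_trans by blast
  have "same_pt F cor (fst ((s1@s2) ! i), snd (snd ((s1@s2) ! i))) (fst ((s1@s2) ! Suc i), fst (snd ((s1@s2) ! Suc i)))"
    if i: "Suc i < length (s1 @ s2)" for i
  proof -
    consider "Suc i < length s1" | "Suc i = length s1" | "length s1 \<le> i" by linarith
    then show ?thesis
    proof cases
      case 1 then show ?thesis using J1[of i] by (simp add: nth_append)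
    next
      case 3
      then have "Suc (i - length s1) < length s2" using i by simp
      from J2[OF this] 3 show ?thesis by (simp add: nth_append Suc_diff_le)
    next
      case 4: 2
      then have a: "(s1 @ s2) ! i = last s1" by (metis 4 diff_Suc_1 last_conv_nth lessI n1 nth_append)
      have b: "(s1 @ s2) ! Suc i = hd s2" using 4 n2 by (simp add: nth_append hd_conv_nth)
      show ?thesis unfolding a b by (rule mid)
    qed
  qed
  then show ?thesis using 1 2 n1 n2 unfolding string_ok_def by auto
qed

lemma so_split:
  assumes "string_ok F cor ok p q (a # rest)"
  shows "string_ok F cor ok p (fst a, snd (snd a)) [a]"
    and "rest = [] \<Longrightarrow> same_pt F cor (fst a, snd (snd a)) q"
    and "rest \<noteq> [] \<Longrightarrow> string_ok F cor ok (fst a, snd (snd a)) q rest"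
proof -
  show "string_ok F cor ok p (fst a, snd (snd a)) [a]"
    using assms unfolding string_ok_def by (auto simp: same_pt_refl)
  show "rest = [] \<Longrightarrow> same_pt F cor (fst a, snd (snd a)) q"
    using assms unfolding string_ok_def by auto
  assume ne: "rest \<noteq> []"
  have J: "\<And>i. Suc i < length (a#rest) \<Longrightarrow>
        same_pt F cor (fst ((a#rest) ! i), snd (snd ((a#rest) ! i))) (fst ((a#rest) ! Suc i), fst (snd ((a#rest) ! Suc i)))"
    using assms unfolding string_ok_def by blast
  have h: "same_pt F cor (fst a, snd (snd a)) (fst (hd rest), fst (snd (hd rest)))"
    using J[of 0] ne by (simp add: hd_conv_nth)
  have j: "same_pt F cor (fst (rest ! i), snd (snd (rest ! i))) (fst (rest ! Suc i), fst (snd (rest ! Suc i)))"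
    if "Suc i < length rest" for i using J[of "Suc i"] that by simp
  show "string_ok F cor ok (fst a, snd (snd a)) q rest"
    using assms ne h j unfolding string_ok_def by auto
qed

lemma len_Cons: "string_len ((f, z, w) # ss) = cmod (z - w) + string_len ss"
  by (simp add: string_len_def)
lemma len_append: "string_len (s1 @ s2) = string_len s1 + string_len s2"
  by (simp add: string_len_def)
lemma len_Nil: "string_len [] = 0" by (simp add: string_len_def)
lemma len_nonneg: "string_len ss \<ge> 0"
  unfolding string_len_def by (induction ss) auto

abbreviation eok :: "complex \<Rightarrow> complex \<Rightarrow> bool" where
  "eok \<equiv> (\<lambda>z w. \<exists>k<5. z \<in> pedge k \<and> w \<in> pedge k)"

lemma pc_Pent: "pc k \<in> Pent"
proof -
  have "pc (k mod 5) \<in> pc ` {..<5}" by simp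
  then show ?thesis unfolding Pent_def pc_mod by (rule hull_inc)
qed
lemma pedge_Pent: "pedge k \<subseteq> Pent"
  unfolding pedge_def Pent_def
  by (rule closed_segment_subset) (auto simp: convex_convex_hull pc_Pent[unfolded Pent_def])
lemma skel_Pent: "skel \<subseteq> Pent" unfolding skel_def using pedge_Pent by blast
lemma pc_pedge1: "pc k \<in> pedge k" unfolding pedge_def by simp
lemma pc_pedge2: "pc (Suc k) \<in> pedge k" unfolding pedge_def by simp
lemma eok_any: "z \<in> pedge k \<Longrightarrow> w \<in> pedge k \<Longrightarrow> eok z w"
  by (rule exI[of _ "k mod 5"]) (simp add: pedge_mod)
lemma pedge_skel: "pedge k \<subseteq> skel"
proof -
  have "k mod 5 \<in> {..<5}" by simp
  then have "pedge (k mod 5) \<subseteq> skel" unfolding skel_def by blast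
  then show ?thesis using pedge_mod[of k] by simp
qed

lemma seg1:
  "f \<in> F \<Longrightarrow> z \<in> pedge k \<Longrightarrow> w \<in> pedge k \<Longrightarrow> string_ok F cor eok (f, z) (f, w) [(f, z, w)]"
  by (rule so_single) (auto simp: same_pt_refl intro: eok_any dest: pedge_Pent[THEN subsetD])

lemma P0: "f \<in> F \<Longrightarrow> z \<in> pedge k \<Longrightarrow> w \<in> pedge k \<Longrightarrow>
   \<exists>ss. string_ok F cor eok (f, z) (f, w) ss \<and> string_len ss \<le> 3 * cmod (z - w)"
  by (intro exI[of _ "[(f, z, w)]"]) (auto simp: seg1 len_Cons len_Nil)

lemma P1: assumes "f \<in> F" "z \<in> pedge k" "w \<in> pedge (Suc k)"
  shows "\<exists>ss. string_ok F cor eok (f, z) (f, w) ss \<and> string_len ss \<le> 3 * cmod (z - w)"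
    "\<exists>ss. string_ok F cor eok (f, w) (f, z) ss \<and> string_len ss \<le> 3 * cmod (w - z)"
proof -
  let ?c = "pc (Suc k)"
  have s1: "string_ok F cor eok (f, z) (f, ?c) [(f, z, ?c)]" using assms by (intro seg1) (auto simp: pc_pedge2)
  have s2: "string_ok F cor eok (f, ?c) (f, w) [(f, ?c, w)]" using assms by (intro seg1) (auto simp: pc_pedge1)
  have t1: "string_ok F cor eok (f, w) (f, ?c) [(f, w, ?c)]" using assms by (intro seg1) (auto simp: pc_pedge1)
  have t2: "string_ok F cor eok (f, ?c) (f, z) [(f, ?c, z)]" using assms by (intro seg1) (auto simp: pc_pedge2)
  have g: "cmod (z - ?c) + cmod (?c - w) \<le> 3 * cmod (z - w)" using GA assms by blast
  show "\<exists>ss. string_ok F cor eok (f, z) (f, w) ss \<and> string_len ss \<le> 3 * cmod (z - w)"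
    by (intro exI[of _ "[(f, z, ?c)] @ [(f, ?c, w)]"] conjI so_append[OF s1 s2])
      (use g in \<open>simp add: len_append len_Cons len_Nil\<close>)
  show "\<exists>ss. string_ok F cor eok (f, w) (f, z) ss \<and> string_len ss \<le> 3 * cmod (w - z)"
    by (intro exI[of _ "[(f, w, ?c)] @ [(f, ?c, z)]"] conjI so_append[OF t1 t2])
      (use g in \<open>simp add: len_append len_Cons len_Nil norm_minus_commute\<close>)
qed

lemma P2: assumes "f \<in> F" "z \<in> pedge k" "w \<in> pedge (Suc (Suc k))"
  shows "\<exists>ss. string_ok F cor eok (f, z) (f, w) ss \<and> string_len ss \<le> 3 * cmod (z - w)"
    "\<exists>ss. string_ok F cor eok (f, w) (f, z) ss \<and> string_len ss \<le> 3 * cmod (w - z)"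
proof -
  let ?c = "pc (Suc k)" and ?d = "pc (Suc (Suc k))"
  have s1: "string_ok F cor eok (f, z) (f, ?c) [(f, z, ?c)]" using assms by (intro seg1) (auto simp: pc_pedge2)
  have s2: "string_ok F cor eok (f, ?c) (f, ?d) [(f, ?c, ?d)]" using assms by (intro seg1[where k="Suc k"]) (auto simp: pc_pedge1 pc_pedge2)
  have s3: "string_ok F cor eok (f, ?d) (f, w) [(f, ?d, w)]" using assms by (intro seg1) (auto simp: pc_pedge1)
  have t1: "string_ok F cor eok (f, w) (f, ?d) [(f, w, ?d)]" using assms by (intro seg1) (auto simp: pc_pedge1)
  have t2: "string_ok F cor eok (f, ?d) (f, ?c) [(f, ?d, ?c)]" using assms by (intro seg1[where k="Suc k"]) (auto simp: pc_pedge1 pc_pedge2)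
  have t3: "string_ok F cor eok (f, ?c) (f, z) [(f, ?c, z)]" using assms by (intro seg1) (auto simp: pc_pedge2)
  have g: "cmod (z - ?c) + cmod (?c - ?d) + cmod (?d - w) \<le> 3 * cmod (z - w)" using GB assms by blast
  show "\<exists>ss. string_ok F cor eok (f, z) (f, w) ss \<and> string_len ss \<le> 3 * cmod (z - w)"
    by (intro exI[of _ "([(f, z, ?c)] @ [(f, ?c, ?d)]) @ [(f, ?d, w)]"] conjI so_append[OF so_append[OF s1 s2] s3])
      (use g in \<open>simp add: len_append len_Cons len_Nil\<close>)
  show "\<exists>ss. string_ok F cor eok (f, w) (f, z) ss \<and> string_len ss \<le> 3 * cmod (w - z)"
    by (intro exI[of _ "([(f, w, ?d)] @ [(f, ?d, ?c)]) @ [(f, ?c, z)]"] conjI so_append[OF so_append[OF t1 t2] t3])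
      (use g in \<open>simp add: len_append len_Cons len_Nil norm_minus_commute\<close>)
qed

lemma pent_path:
  assumes f: "f \<in> F" and z: "z \<in> skel" and w: "w \<in> skel"
  shows "\<exists>ss. string_ok F cor eok (f, z) (f, w) ss \<and> string_len ss \<le> 3 * cmod (z - w)"
proof -
  obtain k j where k: "k < 5" "z \<in> pedge k" and j: "j < 5" "w \<in> pedge j"
    using z w unfolding skel_def by auto
  have "j = k \<or> j = Suc k mod 5 \<or> j = Suc (Suc k) mod 5 \<or> k = Suc j mod 5 \<or> k = Suc (Suc j) mod 5"
  proof -
    have "k = 0 \<or> k = 1 \<or> k = 2 \<or> k = 3 \<or> k = 4" using k(1) by linarith
    moreover have "j = 0 \<or> j = 1 \<or> j = 2 \<or> j = 3 \<or> j = 4" using j(1) by linarith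
    ultimately show ?thesis by (elim disjE) simp_all
  qed
  then show ?thesis
  proof (elim disjE)
    assume "j = k" then show ?thesis using P0[OF f k(2), of w] j(2) by simp
  next
    assume h: "j = Suc k mod 5" have "w \<in> pedge (Suc k)" using j(2) unfolding h pedge_mod .
    then show ?thesis by (rule P1(1)[OF f k(2)])
  next
    assume h: "j = Suc (Suc k) mod 5" have "w \<in> pedge (Suc (Suc k))" using j(2) unfolding h pedge_mod .
    then show ?thesis by (rule P2(1)[OF f k(2)])
  next
    assume h: "k = Suc j mod 5" have "z \<in> pedge (Suc j)" using k(2) unfolding h pedge_mod .
    then show ?thesis by (rule P1(2)[OF f j(2)])
  next
    assume h: "k = Suc (Suc j) mod 5" have "z \<in> pedge (Suc (Suc j))" using k(2) unfolding h pedge_mod .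
    then show ?thesis by (rule P2(2)[OF f j(2)])
  qed
qed

lemma seg_mem: "0 \<le> t \<Longrightarrow> t \<le> 1 \<Longrightarrow> (1 - t) *\<^sub>R a + t *\<^sub>R b \<in> closed_segment a b"
  unfolding closed_segment_def by blast
lemma seg_mem': "0 \<le> t \<Longrightarrow> t \<le> 1 \<Longrightarrow> t *\<^sub>R a + (1 - t) *\<^sub>R b \<in> closed_segment a b"
  using seg_mem[of "1 - t" a b] by simp

lemma edge_pt_skel: "0 \<le> t \<Longrightarrow> t \<le> 1 \<Longrightarrow> (1 - t) *\<^sub>R pc k + t *\<^sub>R pc (Suc k) \<in> skel"
  using seg_mem[of t "pc k" "pc (Suc k)"] pedge_skel[of k] unfolding pedge_def by blast
lemma edge_pt_skel': "0 \<le> t \<Longrightarrow> t \<le> 1 \<Longrightarrow> t *\<^sub>R pc k + (1 - t) *\<^sub>R pc (Suc k) \<in> skel"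
  using seg_mem'[of t "pc k" "pc (Suc k)"] pedge_skel[of k] unfolding pedge_def by blast
lemma pc_skel: "pc k \<in> skel" using pc_pedge1 pedge_skel by blast

lemma G1: "glue F cor a b \<Longrightarrow> snd a \<notin> skel \<Longrightarrow> b = a"
proof -
  assume g: "glue F cor a b" and n: "snd a \<notin> skel"
  obtain f z g' w where ab: "a = (f, z)" "b = (g', w)" by (cases a, cases b)
  show "b = a" using g n pc_skel edge_pt_skel unfolding ab glue_def by auto
qed

lemma G2: "glue F cor a b \<Longrightarrow> snd a \<in> skel \<Longrightarrow> snd b \<in> skel"
proof -
  assume g: "glue F cor a b" and n: "snd a \<in> skel"
  obtain f z g' w where ab: "a = (f, z)" "b = (g', w)" by (cases a, cases b)
  show ?thesis using g n pc_skel edge_pt_skel edge_pt_skel' unfolding ab glue_def by auto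
qed

definition adj :: "'f set \<Rightarrow> ('f \<Rightarrow> nat \<Rightarrow> 'v) \<Rightarrow> ('f \<times> 'f) set" where
  "adj F cor = {(a, b). a \<in> F \<and> b \<in> F \<and> (\<exists>k<5. \<exists>j<5. cor a k = cor b j)}"

lemma nx_less: "nx j < 5" unfolding nx_def by simp

lemma G3: "glue F cor a b \<Longrightarrow> fst a = fst b \<or> (fst a, fst b) \<in> adj F cor"
proof -
  assume g: "glue F cor a b"
  obtain f z g' w where ab: "a = (f, z)" "b = (g', w)" by (cases a, cases b)
  show ?thesis using g nx_less unfolding ab glue_def adj_def by auto
qed

lemma SP1: "same_pt F cor a b \<Longrightarrow> snd a \<notin> skel \<Longrightarrow> b = a"
  unfolding same_pt_def
proof (induction rule: rtrancl_induct)
  case base then show ?case by simp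
next
  case (step y b)
  then have "y = a" by simp
  with step show ?case using G1[of F cor y b] by simp
qed

lemma SP2: "same_pt F cor a b \<Longrightarrow> snd a \<in> skel \<Longrightarrow> snd b \<in> skel"
  unfolding same_pt_def
proof (induction rule: rtrancl_induct)
  case base then show ?case by simp
next
  case (step y b)
  then show ?case using G2[of F cor y b] by simp
qed

lemma SP3: "same_pt F cor a b \<Longrightarrow> snd b \<in> skel \<Longrightarrow> snd a \<in> skel"
proof (rule ccontr)
  assume "same_pt F cor a b" "snd b \<in> skel" "snd a \<notin> skel"
  then show False using SP1[of F cor a b] by simp
qed

lemma SP4: "same_pt F cor a b \<Longrightarrow> (fst a, fst b) \<in> (adj F cor)\<^sup>*"
  unfolding same_pt_def
proof (induction rule: rtrancl_induct)
  case base then show ?case by simp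
next
  case (step y b)
  then have "fst y = fst b \<or> (fst y, fst b) \<in> adj F cor"
    using G3[of F cor y b] by simp
  with step show ?case using rtrancl.rtrancl_into_rtrancl[of "fst a" "fst y" "adj F cor" "fst b"] by auto
qed

lemma so_mem: "string_ok F cor ok p q ss \<Longrightarrow> (f, z, w) \<in> set ss \<Longrightarrow> f \<in> F \<and> z \<in> Pent \<and> w \<in> Pent \<and> ok z w"
  unfolding string_ok_def by fast
lemma so_hd: "string_ok F cor ok p q ((f, z, w) # r) \<Longrightarrow> same_pt F cor p (f, z)"
  unfolding string_ok_def by simp

lemma so_join: "string_ok F cor ok p m [a] \<Longrightarrow> (rest = [] \<Longrightarrow> same_pt F cor m q) \<Longrightarrow>
   (rest \<noteq> [] \<Longrightarrow> string_ok F cor ok m q rest) \<Longrightarrow> string_ok F cor ok p q (a # rest)"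
proof (cases "rest = []")
  case True
  assume a: "string_ok F cor ok p m [a]" and b: "rest = [] \<Longrightarrow> same_pt F cor m q"
  show ?thesis using so_post[OF a b[OF True]] True by simp
next
  case False
  assume a: "string_ok F cor ok p m [a]" and c: "rest \<noteq> [] \<Longrightarrow> string_ok F cor ok m q rest"
  show ?thesis using so_append[OF a c[OF False]] by simp
qed

lemma convert:
  "string_ok F cor (\<lambda>_ _. True) p q ss \<Longrightarrow> snd p \<in> skel \<Longrightarrow> snd q \<in> skel \<Longrightarrow>
   \<exists>ss'. string_ok F cor eok p q ss' \<and> string_len ss' \<le> 3 * string_len ss"
proof (induction "length ss" arbitrary: p ss rule: less_induct)
  case less
  have "ss \<noteq> []" using less.prems unfolding string_ok_def by simp
  then obtain f1 z1 w1 rest where ss: "ss = (f1, z1, w1) # rest" by (metis list.exhaust prod_cases3)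
  have m1: "f1 \<in> F" "z1 \<in> Pent" "w1 \<in> Pent" using so_mem[OF less.prems(1), of f1 z1 w1] ss by auto
  have sp: "same_pt F cor p (f1, z1)" using so_hd less.prems(1) ss by metis
  have z1: "z1 \<in> skel" using SP2[OF sp] less.prems(2) by simp
  have spl: "string_ok F cor (\<lambda>_ _. True) p (f1, w1) [(f1, z1, w1)]"
     "rest = [] \<Longrightarrow> same_pt F cor (f1, w1) q"
     "rest \<noteq> [] \<Longrightarrow> string_ok F cor (\<lambda>_ _. True) (f1, w1) q rest"
    using so_split[of F cor "\<lambda>_ _. True" p q "(f1, z1, w1)" rest] less.prems(1) ss by auto
  have lss: "string_len ss = cmod (z1 - w1) + string_len rest" using ss by (simp add: len_Cons)
  show ?case
  proof (cases "w1 \<in> skel")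
    case True
    obtain s1 where s1: "string_ok F cor eok (f1, z1) (f1, w1) s1" "string_len s1 \<le> 3 * cmod (z1 - w1)"
      using pent_path[OF m1(1) z1 True] by blast
    have s1': "string_ok F cor eok p (f1, w1) s1" using so_pre[OF sp s1(1)] .
    show ?thesis
    proof (cases "rest = []")
      case True
      then show ?thesis using so_post[OF s1' spl(2)] s1(2) lss by (auto simp: len_Nil)
    next
      case False
      obtain s2 where s2: "string_ok F cor eok (f1, w1) q s2" "string_len s2 \<le> 3 * string_len rest"
        using less.hyps[of rest "(f1, w1)"] spl(3)[OF False] \<open>w1 \<in> skel\<close> less.prems(3) ss by auto
      show ?thesis
        by (intro exI[of _ "s1 @ s2"] conjI so_append[OF s1' s2(1)])
          (use s1(2) s2(2) lss in \<open>simp add: len_append\<close>)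
    qed
  next
    case False
    have "rest \<noteq> []"
    proof
      assume "rest = []"
      then have "q = (f1, w1)" using SP1[OF spl(2)] False by simp
      then show False using False less.prems(3) by simp
    qed
    then obtain f2 z2 w2 rest' where r: "rest = (f2, z2, w2) # rest'" by (metis list.exhaust prod_cases3)
    have R: "string_ok F cor (\<lambda>_ _. True) (f1, w1) q rest" using spl(3) \<open>rest \<noteq> []\<close> .
    have "(f2, z2) = (f1, w1)" using SP1[OF so_hd[OF R[unfolded r]]] False by simp
    then have f2: "f2 = f1" "z2 = w1" by auto
    have m2: "w2 \<in> Pent" using so_mem[OF R, of f2 z2 w2] r by auto
    have spl2: "rest' = [] \<Longrightarrow> same_pt F cor (f1, w2) q"
     "rest' \<noteq> [] \<Longrightarrow> string_ok F cor (\<lambda>_ _. True) (f1, w2) q rest'"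
      using so_split[of F cor "\<lambda>_ _. True" "(f1, w1)" q "(f2, z2, w2)" rest'] R r f2 by auto
    have one: "string_ok F cor (\<lambda>_ _. True) p (f1, w2) [(f1, z1, w2)]"
      by (rule so_single) (use m1 m2 sp in \<open>auto simp: same_pt_refl\<close>)
    have new: "string_ok F cor (\<lambda>_ _. True) p q ((f1, z1, w2) # rest')"
      by (rule so_join[OF one spl2])
    have "length ((f1, z1, w2) # rest') < length ss" using ss r by simp
    then obtain s' where s': "string_ok F cor eok p q s'" "string_len s' \<le> 3 * string_len ((f1, z1, w2) # rest')"
      using less.hyps new less.prems(2,3) by blast
    have tri: "cmod (z1 - w2) \<le> cmod (z1 - w1) + cmod (w1 - w2)" by (rule norm_diff_triangle_ineq[of z1 w1 w1 w2, simplified])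
    have "string_len ((f1, z1, w2) # rest') \<le> string_len ss"
      using tri lss r f2 by (simp add: len_Cons)
    then show ?thesis using s' by auto
  qed
qed

lemma openin_real: "openin (realisation_top F cor) U \<longleftrightarrow>
   (U \<subseteq> cls F cor ` reps F \<and> (\<forall>f\<in>F. openin (top_of_set Pent) {z \<in> Pent. cls F cor (f, z) \<in> U}))"
  unfolding realisation_top_def by (rule fun_cong[OF topology_inverse'[OF istopology_realisation]])

lemma topspace_real: "topspace (realisation_top F cor) \<subseteq> cls F cor ` reps F"
proof
  fix x assume "x \<in> topspace (realisation_top F cor)"
  then obtain S where "openin (realisation_top F cor) S" "x \<in> S" unfolding topspace_def by blast
  then show "x \<in> cls F cor ` reps F" unfolding openin_real by blast
qed

lemma cls_mem: "h \<in> F \<Longrightarrow> z \<in> Pent \<Longrightarrow> (h, z) \<in> cls F cor (h, z)"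
  unfolding cls_def reps_def by (simp add: same_pt_refl)
lemma cls_memD: "q \<in> cls F cor p \<Longrightarrow> same_pt F cor p q"
  unfolding cls_def by simp

lemma cls_same:
  assumes "h \<in> F" "z \<in> Pent" "g \<in> F" "z' \<in> Pent" "cls F cor (h, z) = cls F cor (g, z')"
  shows "same_pt F cor (g, z') (h, z)" "same_pt F cor (h, z) (g, z')"
proof -
  have "(h, z) \<in> cls F cor (g, z')" using cls_mem[OF assms(1,2), of cor] assms(5) by simp
  then show "same_pt F cor (g, z') (h, z)" by (rule cls_memD)
  have "(g, z') \<in> cls F cor (h, z)" using cls_mem[OF assms(3,4), of cor] assms(5) by simp
  then show "same_pt F cor (h, z) (g, z')" by (rule cls_memD)
qed

lemma Pent_ne: "Pent \<noteq> {}" using pc_Pent by blast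

lemma face_connected:
  assumes ct: "combinatorial_tiling F cor" and f0: "f0 \<in> F" and g: "g \<in> F"
  shows "(f0, g) \<in> (adj F cor)\<^sup>*"
proof (rule ccontr)
  assume ng: "(f0, g) \<notin> (adj F cor)\<^sup>*"
  define C where "C = {h \<in> F. (f0, h) \<in> (adj F cor)\<^sup>*}"
  define U where "U = {cls F cor (h, z) | h z. h \<in> C \<and> z \<in> Pent}"
  define V where "V = {cls F cor (h, z) | h z. h \<in> F - C \<and> z \<in> Pent}"
  have ce: "connected_space (euclidean::(real^2) topology)"
    by (metis connectedin_iff_connected connected_UNIV connectedin_topspace topspace_euclidean)
  have conn: "connected_space (realisation_top F cor)"
    using homeomorphic_connected_space[OF ct[unfolded combinatorial_tiling_def]] ce by simp
  have adjF: "(a, b) \<in> (adj F cor)\<^sup>* \<Longrightarrow> a \<in> F \<Longrightarrow> b \<in> F" for a b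
    by (induction rule: rtrancl_induct) (auto simp: adj_def)
  have keyU: "cls F cor (h, z) \<in> U \<longleftrightarrow> h \<in> C" if h: "h \<in> F" "z \<in> Pent" for h z
  proof
    assume "cls F cor (h, z) \<in> U"
    then obtain g' z' where gz: "g' \<in> C" "z' \<in> Pent" "cls F cor (h, z) = cls F cor (g', z')"
      unfolding U_def by blast
    have "same_pt F cor (g', z') (h, z)" using cls_same(1)[OF h _ gz(2,3)] gz(1) unfolding C_def by auto
    from SP4[OF this] have "(g', h) \<in> (adj F cor)\<^sup>*" by simp
    with gz(1) h show "h \<in> C" unfolding C_def by (auto intro: rtrancl_trans)
  next
    assume "h \<in> C" then show "cls F cor (h, z) \<in> U" unfolding U_def using h by blast
  qed
  have keyV: "cls F cor (h, z) \<in> V \<longleftrightarrow> h \<notin> C" if h: "h \<in> F" "z \<in> Pent" for h z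
  proof
    assume "cls F cor (h, z) \<in> V"
    then obtain g' z' where gz: "g' \<in> F" "g' \<notin> C" "z' \<in> Pent" "cls F cor (h, z) = cls F cor (g', z')"
      unfolding V_def by blast
    have "same_pt F cor (h, z) (g', z')" using cls_same(2)[OF h gz(1) gz(3,4)] .
    from SP4[OF this] have hg: "(h, g') \<in> (adj F cor)\<^sup>*" by simp
    show "h \<notin> C"
    proof
      assume "h \<in> C"
      then have "g' \<in> C" using hg gz(1) unfolding C_def by (auto intro: rtrancl_trans)
      with gz(2) show False by simp
    qed
  next
    assume "h \<notin> C" then show "cls F cor (h, z) \<in> V" unfolding V_def using h by blast
  qed
  have oU: "openin (realisation_top F cor) U"
    unfolding openin_real
  proof (intro conjI ballI)
    show "U \<subseteq> cls F cor ` reps F" unfolding U_def C_def reps_def by blast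
    fix h assume h: "h \<in> F"
    have "{z \<in> Pent. cls F cor (h, z) \<in> U} = (if h \<in> C then Pent else {})"
      using keyU[OF h] by auto
    then show "openin (top_of_set Pent) {z \<in> Pent. cls F cor (h, z) \<in> U}" by simp
  qed
  have oV: "openin (realisation_top F cor) V"
    unfolding openin_real
  proof (intro conjI ballI)
    show "V \<subseteq> cls F cor ` reps F" unfolding V_def reps_def by blast
    fix h assume h: "h \<in> F"
    have "{z \<in> Pent. cls F cor (h, z) \<in> V} = (if h \<in> C then {} else Pent)"
      using keyV[OF h] by auto
    then show "openin (top_of_set Pent) {z \<in> Pent. cls F cor (h, z) \<in> V}" by simp
  qed
  have cov: "topspace (realisation_top F cor) \<subseteq> U \<union> V"
  proof
    fix x assume "x \<in> topspace (realisation_top F cor)"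
    then obtain h z where hz: "h \<in> F" "z \<in> Pent" "x = cls F cor (h, z)"
      using topspace_real unfolding reps_def by blast
    show "x \<in> U \<union> V"
    proof (cases "h \<in> C")
      case True then show ?thesis unfolding U_def using hz by blast
    next
      case False then show ?thesis unfolding V_def using hz by blast
    qed
  qed
  have dis: "U \<inter> V = {}"
  proof -
    have "x \<notin> V" if "x \<in> U" for x
    proof -
      from that obtain h z where "h \<in> C" "z \<in> Pent" "x = cls F cor (h, z)" unfolding U_def by blast
      then show ?thesis using keyV[of h z] unfolding C_def by auto
    qed
    then show ?thesis by blast
  qed
  have "f0 \<in> C" unfolding C_def using f0 by simp
  then have Une: "U \<noteq> {}" unfolding U_def using Pent_ne by blast
  have "g \<in> F - C" unfolding C_def using g ng by simp
  then have Vne: "V \<noteq> {}" unfolding V_def using Pent_ne by blast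
  show False using connected_spaceD[OF conn oU oV cov dis Une Vne] .
qed

lemma edge_connect:
  assumes "(f, g) \<in> (adj F cor)\<^sup>*" "f \<in> F"
  shows "\<forall>z\<in>skel. \<forall>w\<in>skel. \<exists>ss. string_ok F cor eok (f, z) (g, w) ss"
  using assms(1)
proof (induction rule: rtrancl_induct)
  case base then show ?case using pent_path[OF assms(2)] by blast
next
  case (step h g)
  show ?case
  proof (intro ballI)
    fix z w assume z: "z \<in> skel" and w: "w \<in> skel"
    obtain k j where kj: "h \<in> F" "g \<in> F" "k < 5" "j < 5" "cor h k = cor g j"
      using step(2) unfolding adj_def by auto
    obtain s1 where s1: "string_ok F cor eok (f, z) (h, pc k) s1" using step(3) z pc_skel by blast
    obtain s2 where s2: "string_ok F cor eok (g, pc j) (g, w) s2" using pent_path[OF kj(2) pc_skel w] by blast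
    have "glue F cor (h, pc k) (g, pc j)" unfolding glue_def using kj pc_Pent by auto
    then have "same_pt F cor (h, pc k) (g, pc j)" unfolding same_pt_def by auto
    from so_pre[OF this s2] have "string_ok F cor eok (h, pc k) (g, w) s2" .
    from so_append[OF s1 this] show "\<exists>ss. string_ok F cor eok (f, z) (g, w) ss" by blast
  qed
qed

theorem theorem2p2:
  fixes F :: "'f set" and cor :: "'f \<Rightarrow> nat \<Rightarrow> 'v"
  assumes "combinatorial_tiling F cor"
    and "locally_iso_K F cor"
  shows "\<forall>f\<in>F. \<forall>g\<in>F. \<forall>z\<in>skel. \<forall>w\<in>skel.
           dist_aff F cor (f, z) (g, w) \<le> dist_edge F cor (f, z) (g, w) \<and>
           dist_edge F cor (f, z) (g, w) \<le> 3 * dist_aff F cor (f, z) (g, w)"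
proof (intro ballI)
  fix f g z w assume f: "f \<in> F" and g: "g \<in> F" and z: "z \<in> skel" and w: "w \<in> skel"
  define A where "A = {string_len ss | ss. string_ok F cor (\<lambda>_ _. True) (f, z) (g, w) ss}"
  define E where "E = {string_len ss | ss. string_ok F cor (\<lambda>z w. \<exists>k<5. z \<in> pedge k \<and> w \<in> pedge k) (f, z) (g, w) ss}"
  have dA: "dist_aff F cor (f, z) (g, w) = Inf A" unfolding dist_aff_def A_def ..
  have dE: "dist_edge F cor (f, z) (g, w) = Inf E" unfolding dist_edge_def E_def ..
  have EA: "E \<subseteq> A" unfolding E_def A_def using so_mono[of _ "\<lambda>_ _. True"] by blast
  obtain ss where "string_ok F cor eok (f, z) (g, w) ss"
    using edge_connect[OF face_connected[OF assms(1) f g] f] z w by blast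
  then have Ene: "E \<noteq> {}" unfolding E_def by blast
  then have Ane: "A \<noteq> {}" using EA by blast
  have bA: "bdd_below A" unfolding A_def by (rule bdd_belowI[of _ 0]) (auto simp: len_nonneg)
  have bE: "bdd_below E" unfolding E_def by (rule bdd_belowI[of _ 0]) (auto simp: len_nonneg)
  have 1: "Inf A \<le> Inf E" by (rule cInf_superset_mono[OF Ene bA EA])
  have "Inf E / 3 \<le> a" if a: "a \<in> A" for a
  proof -
    obtain s where s: "string_ok F cor (\<lambda>_ _. True) (f, z) (g, w) s" "a = string_len s"
      using a unfolding A_def by blast
    obtain s' where s': "string_ok F cor eok (f, z) (g, w) s'" "string_len s' \<le> 3 * string_len s"
      using convert[OF s(1)] z w by auto
    have "string_len s' \<in> E" unfolding E_def using s'(1) by blast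
    then have "Inf E \<le> string_len s'" by (rule cInf_lower[OF _ bE])
    then show ?thesis using s'(2) s(2) by simp
  qed
  then have "Inf E / 3 \<le> Inf A" by (intro cInf_greatest[OF Ane]) auto
  then show "dist_aff F cor (f, z) (g, w) \<le> dist_edge F cor (f, z) (g, w) \<and>
           dist_edge F cor (f, z) (g, w) \<le> 3 * dist_aff F cor (f, z) (g, w)"
    unfolding dA dE using 1 by simp
qed

end
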